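(* Let $X$ be a real Banach space and $X_1=X\setminus B_X$. The following statements are equivalent. (1) $X$ is UR. (2) $\sup_{x,x'\in X_1}\left|r(P_{S_X}(x,\frac1n),P_{S_X}(x',\frac1n))-\left\|\frac{x}{\|x\|}-\frac{x'}{\|x'\|}\right\|\right|\to0$. (3) $\sup_{x\in X_1}\mathrm{diam}(P_{S_X}(x,\frac1n))\to0$. (4) $P_{S_X}(x)=\{\frac{x}{\|x\|}\}$ for every $x\in X_1$ and $\sup_{x\in X_1}H(P_{S_X}(x,\frac1n),P_{S_X}(x))\to0$. (5) $S_X$ is uniformly strongly Chebyshev on $X_1$.
   Context: $B_X,S_X$ are the closed unit ball and unit sphere of $X$. For non-empty closed $A\subseteq X$, $x\in X$, $\delta\ge0$: $P_A(x,\delta)=\{y\in A:\|x-y\|\le\inf_{z\in A}\|x-z\|+\delta\}$, $P_A(x)=P_A(x,0)$. $A$ is uniformly strongly Chebyshev on $D$ if $P_A(x)$ is a singleton for every $x\in D$ and for every $\epsilon>0$ there is $\delta>0$ such that $P_A(x,\delta)\subseteq P_A(x)+\epsilon B_X$ for all $x\in D$. For non-empty bounded $A,B$: $r(A,B)=\sup\{\|a-b\|:a\in A,b\in B\}$, $H(A,B)=\inf\{r>0:A\subseteq B+rB_X,B\subseteq A+rB_X\}$. $X$ is UR if $\|x_n-y_n\|\to0$ whenever $(x_n),(y_n)\subseteq S_X$ with $\|\frac{x_n+y_n}{2}\|\to1$. *)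

theory Defs
  imports "HOL-Analysis.Analysis"
begin

definition unit_ball :: "'a::real_normed_vector set" where
  "unit_ball = cball 0 1"

definition unit_sphere :: "'a::real_normed_vector set" where
  "unit_sphere = sphere 0 1"

definition approx_proj :: "'a::real_normed_vector set \<Rightarrow> 'a \<Rightarrow> real \<Rightarrow> 'a set" where
  "approx_proj A x \<delta> = {y \<in> A. norm (x - y) \<le> (INF z\<in>A. norm (x - z)) + \<delta>}"

definition metric_proj :: "'a::real_normed_vector set \<Rightarrow> 'a \<Rightarrow> 'a set" where
  "metric_proj A x = approx_proj A x 0"

definition uniformly_strongly_chebyshev :: "'a::real_normed_vector set \<Rightarrow> 'a set \<Rightarrow> bool" where
  "uniformly_strongly_chebyshev A D \<longleftrightarrow>
     (\<forall>x\<in>D. \<exists>p. metric_proj A x = {p}) \<and>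
     (\<forall>\<epsilon>>0. \<exists>\<delta>>0. \<forall>x\<in>D.
        approx_proj A x \<delta> \<subseteq> {p + \<epsilon> *\<^sub>R u | p u. p \<in> metric_proj A x \<and> u \<in> unit_ball})"

definition rad :: "'a::real_normed_vector set \<Rightarrow> 'a set \<Rightarrow> real" where
  "rad A B = (SUP (a, b)\<in>A \<times> B. norm (a - b))"

definition hausdorff :: "'a::real_normed_vector set \<Rightarrow> 'a set \<Rightarrow> real" where
  "hausdorff A B = Inf {r. r > 0 \<and>
      A \<subseteq> {b + r *\<^sub>R u | b u. b \<in> B \<and> u \<in> unit_ball} \<and>
      B \<subseteq> {a + r *\<^sub>R u | a u. a \<in> A \<and> u \<in> unit_ball}}"

definition uniformly_rotund :: "'a::real_normed_vector itself \<Rightarrow> bool" where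
  "uniformly_rotund (_::'a itself) \<longleftrightarrow>
     (\<forall>x y :: nat \<Rightarrow> 'a. (\<forall>n. x n \<in> unit_sphere \<and> y n \<in> unit_sphere) \<longrightarrow>
        (\<lambda>n. norm ((x n + y n) /\<^sub>R 2)) \<longlonglongrightarrow> 1 \<longrightarrow>
        (\<lambda>n. norm (x n - y n)) \<longlonglongrightarrow> 0)"

end

theory Submission
  imports Defs
begin


lemma sphere_iff: "y \<in> unit_sphere \<longleftrightarrow> norm y = 1"
  by (simp add: unit_sphere_def)

lemma ball_iff: "y \<in> unit_ball \<longleftrightarrow> norm y \<le> 1"
  by (simp add: unit_ball_def)

lemma norm_minus_unit:
  fixes x :: "'a::real_normed_vector"
  assumes "norm x \<ge> 1"
  shows "norm (x - x /\<^sub>R norm x) = norm x - 1"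
proof -
  have nz: "norm x > 0" using assms by auto
  have "x - x /\<^sub>R norm x = (1 - inverse (norm x)) *\<^sub>R x" by (simp add: scaleR_diff_left)
  hence "norm (x - x /\<^sub>R norm x) = \<bar>1 - inverse (norm x)\<bar> * norm x" by simp
  also have "\<dots> = (1 - inverse (norm x)) * norm x" using assms nz
    by (subst abs_of_nonneg) (auto simp: field_simps)
  also have "\<dots> = norm x - 1" using nz by (simp add: field_simps)
  finally show ?thesis .
qed

lemma inf_dist_sphere:
  fixes x :: "'a::real_normed_vector"
  assumes "norm x \<ge> 1"
  shows "(INF z\<in>unit_sphere. norm (x - z)) = norm x - 1"
proof -
  have nz: "x \<noteq> 0" using assms by auto
  have u: "x /\<^sub>R norm x \<in> unit_sphere" using nz by (simp add: sphere_iff)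
  have e: "norm (x - x /\<^sub>R norm x) = norm x - 1" by (rule norm_minus_unit[OF assms(1)])
  show ?thesis
    unfolding image_def
    apply (rule cInf_eq_minimum)
    using u e apply force
    apply clarsimp
    subgoal for z using norm_triangle_ineq2[of x z] by (simp add: sphere_iff)
    done
qed

lemma approx_proj_iff:
  fixes x :: "'a::real_normed_vector"
  assumes "norm x \<ge> 1"
  shows "y \<in> approx_proj unit_sphere x d \<longleftrightarrow> norm y = 1 \<and> norm (x - y) \<le> norm x - 1 + d"
  using inf_dist_sphere[OF assms] by (simp add: approx_proj_def sphere_iff)

lemma u_in:
  fixes x :: "'a::real_normed_vector"
  assumes "norm x \<ge> 1" "d \<ge> 0"
  shows "x /\<^sub>R norm x \<in> approx_proj unit_sphere x d"
proof -
  have nz: "x \<noteq> 0" using assms by auto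
  have e: "norm (x - x /\<^sub>R norm x) = norm x - 1" by (rule norm_minus_unit[OF assms(1)])
  show ?thesis using e nz assms by (simp add: approx_proj_iff)
qed

lemma approx_mono:
  fixes x :: "'a::real_normed_vector"
  assumes "norm x \<ge> 1" "d \<le> e" "y \<in> approx_proj unit_sphere x d"
  shows "y \<in> approx_proj unit_sphere x e"
  using assms by (auto simp: approx_proj_iff)

lemma approx_sub: "approx_proj unit_sphere x d \<subseteq> unit_sphere"
  by (auto simp: approx_proj_def)

lemma X1_iff: "x \<in> UNIV - unit_ball \<longleftrightarrow> norm x > 1"
  by (auto simp: ball_iff)

lemma sup_tendsto_0_iff:
  fixes f :: "nat \<Rightarrow> 'b \<Rightarrow> real"
  assumes ne: "X \<noteq> {}" and b: "\<And>n x. x \<in> X \<Longrightarrow> 0 \<le> f n x \<and> f n x \<le> B"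
  shows "(\<lambda>n. SUP x\<in>X. f n x) \<longlonglongrightarrow> 0 \<longleftrightarrow> (\<forall>e>0. \<exists>N. \<forall>n\<ge>N. \<forall>x\<in>X. f n x \<le> e)"
proof
  have bdd: "bdd_above (f n ` X)" for n by (rule bdd_aboveI[of _ B]) (use b in auto)
  assume L: "(\<lambda>n. SUP x\<in>X. f n x) \<longlonglongrightarrow> 0"
  show "\<forall>e>0. \<exists>N. \<forall>n\<ge>N. \<forall>x\<in>X. f n x \<le> e"
  proof (intro allI impI)
    fix e :: real assume "e > 0"
    then obtain N where N: "\<forall>n\<ge>N. norm ((SUP x\<in>X. f n x) - 0) < e"
      using LIMSEQ_D[OF L] by blast
    have "f n x \<le> e" if "n \<ge> N" "x \<in> X" for n x
    proof -
      have "f n x \<le> (SUP x\<in>X. f n x)" using cSUP_upper[OF that(2) bdd] .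
      also have "\<dots> < e" using N that(1) by auto
      finally show ?thesis by simp
    qed
    thus "\<exists>N. \<forall>n\<ge>N. \<forall>x\<in>X. f n x \<le> e" by blast
  qed
next
  assume R: "\<forall>e>0. \<exists>N. \<forall>n\<ge>N. \<forall>x\<in>X. f n x \<le> e"
  show "(\<lambda>n. SUP x\<in>X. f n x) \<longlonglongrightarrow> 0"
  proof (rule LIMSEQ_I)
    fix r :: real assume "r > 0"
    then obtain N where N: "\<forall>n\<ge>N. \<forall>x\<in>X. f n x \<le> r/2" using R[rule_format, of "r/2"] by auto
    have "norm ((SUP x\<in>X. f n x) - 0) < r" if "n \<ge> N" for n
    proof -
      obtain x0 where x0: "x0 \<in> X" using ne by auto
      have "0 \<le> f n x0" using b x0 by auto
      also have "\<dots> \<le> (SUP x\<in>X. f n x)" by (rule cSUP_upper[OF x0], rule bdd_aboveI[of _ B]) (use b in auto)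
      finally have 0: "0 \<le> (SUP x\<in>X. f n x)" .
      have "(SUP x\<in>X. f n x) \<le> r/2" by (rule cSUP_least) (use ne N that in auto)
      thus ?thesis using 0 \<open>r>0\<close> by simp
    qed
    thus "\<exists>no. \<forall>n\<ge>no. norm ((SUP x\<in>X. f n x) - 0) < r" by blast
  qed
qed



lemma small_inv:
  assumes "(d::real) > 0"
  shows "\<exists>N>0. \<forall>n\<ge>N. 0 < 1 / real n \<and> 1 / real n \<le> d"
proof -
  obtain N :: nat where N: "N > 0" "inverse (real N) < d" using ex_inverse_of_nat_less[OF assms] by auto
  have "0 < 1 / real n \<and> 1 / real n \<le> d" if "n \<ge> N" for n
  proof -
    have "1 / real n \<le> 1 / real N" using N(1) that by (simp add: frac_le)
    thus ?thesis using N that by (simp add: inverse_eq_divide)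
  qed
  thus ?thesis using N(1) by blast
qed

definition KK :: "'a::real_normed_vector itself \<Rightarrow> bool" where
  "KK _ \<longleftrightarrow> (\<forall>e>0. \<exists>d>0. \<forall>x::'a. norm x > 1 \<longrightarrow>
      (\<forall>y\<in>approx_proj unit_sphere x d. norm (y - x /\<^sub>R norm x) \<le> e))"

definition D3 :: "'a::real_normed_vector itself \<Rightarrow> bool" where
  "D3 _ \<longleftrightarrow> (\<forall>e>0. \<exists>N. \<forall>n\<ge>N. \<forall>x::'a\<in>UNIV - unit_ball.
      diameter (approx_proj unit_sphere x (1 / real n)) \<le> e)"

lemma UR_eps:
  assumes "uniformly_rotund TYPE('a::real_normed_vector)"
  shows "\<forall>e>0. \<exists>d>0. \<forall>x y::'a. norm x = 1 \<longrightarrow> norm y = 1 \<longrightarrow>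
           norm ((x + y) /\<^sub>R 2) \<ge> 1 - d \<longrightarrow> norm (x - y) \<le> e"
proof (rule ccontr)
  assume "\<not> ?thesis"
  then obtain e where e: "e > 0" and H: "\<forall>d>0. \<exists>x y::'a. norm x = 1 \<and> norm y = 1 \<and>
           norm ((x + y) /\<^sub>R 2) \<ge> 1 - d \<and> norm (x - y) > e"
    by (auto simp: not_le)
  have "\<forall>n. \<exists>p::'a\<times>'a. norm (fst p) = 1 \<and> norm (snd p) = 1 \<and>
           norm ((fst p + snd p) /\<^sub>R 2) \<ge> 1 - inverse (real (Suc n)) \<and> norm (fst p - snd p) > e"
  proof
    fix n
    obtain x y :: 'a where "norm x = 1 \<and> norm y = 1 \<and>
           norm ((x + y) /\<^sub>R 2) \<ge> 1 - inverse (real (Suc n)) \<and> norm (x - y) > e"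
      using H[rule_format, of "inverse (real (Suc n))"] by auto
    thus "\<exists>p::'a\<times>'a. norm (fst p) = 1 \<and> norm (snd p) = 1 \<and>
           norm ((fst p + snd p) /\<^sub>R 2) \<ge> 1 - inverse (real (Suc n)) \<and> norm (fst p - snd p) > e"
      by (intro exI[of _ "(x, y)"]) simp
  qed
  from choice[OF this] obtain f :: "nat \<Rightarrow> 'a \<times> 'a" where f0: "\<forall>n. norm (fst (f n)) = 1 \<and> norm (snd (f n)) = 1 \<and>
           norm ((fst (f n) + snd (f n)) /\<^sub>R 2) \<ge> 1 - inverse (real (Suc n)) \<and> norm (fst (f n) - snd (f n)) > e"
    by blast
  note f = f0[rule_format]
  define xs where "xs n = fst (f n)" for n
  define ys where "ys n = snd (f n)" for n
  have up: "norm ((xs n + ys n) /\<^sub>R 2) \<le> 1" for n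
  proof -
    have "norm (xs n + ys n) \<le> 2" using norm_triangle_ineq[of "xs n" "ys n"] f[of n]
      by (simp add: xs_def ys_def)
    thus ?thesis by simp
  qed
  have "(\<lambda>n. norm ((xs n + ys n) /\<^sub>R 2)) \<longlonglongrightarrow> 1"
  proof (rule tendsto_sandwich[of "\<lambda>n. 1 + - inverse (real (Suc n))" _ _ "\<lambda>n. 1"])
    show "\<forall>\<^sub>F n in sequentially. 1 + - inverse (real (Suc n)) \<le> norm ((xs n + ys n) /\<^sub>R 2)"
      using f by (auto simp: xs_def ys_def)
    show "\<forall>\<^sub>F n in sequentially. norm ((xs n + ys n) /\<^sub>R 2) \<le> 1" using up by auto
  qed (simp_all only: LIMSEQ_inverse_real_of_nat_add_minus tendsto_const)
  moreover have "\<forall>n. xs n \<in> unit_sphere \<and> ys n \<in> unit_sphere" using f by (simp add: sphere_iff xs_def ys_def)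
  ultimately have "(\<lambda>n. norm (xs n - ys n)) \<longlonglongrightarrow> 0"
    using assms unfolding uniformly_rotund_def by blast
  then obtain N where "\<forall>n\<ge>N. norm (norm (xs n - ys n) - 0) < e" using LIMSEQ_D e by blast
  thus False using f[of N] by (auto simp: xs_def ys_def)
qed

lemma UR_KK:
  assumes "uniformly_rotund TYPE('a::real_normed_vector)"
  shows "KK TYPE('a)"
  unfolding KK_def
proof (intro allI impI)
  fix e :: real assume "e > 0"
  then obtain d where d: "d > 0" and H: "\<forall>x y::'a. norm x = 1 \<longrightarrow> norm y = 1 \<longrightarrow>
           norm ((x + y) /\<^sub>R 2) \<ge> 1 - d \<longrightarrow> norm (x - y) \<le> e"
    using UR_eps[OF assms] by blast
  have "norm (y - x /\<^sub>R norm x) \<le> e"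
    if x: "norm x > 1" and y: "y \<in> approx_proj unit_sphere x (2 * d)" for x y :: 'a
  proof -
    have y1: "norm y = 1" and yd: "norm (x - y) \<le> norm x - 1 + 2 * d"
      using y x by (auto simp: approx_proj_iff)
    define u where "u = x /\<^sub>R norm x"
    have nz: "norm x \<noteq> 0" using x by linarith
    have u1: "norm u = 1" using nz by (simp add: u_def)
    have nx: "norm x *\<^sub>R u = x" using nz by (simp add: u_def)
    have "u + y = (1 + norm x) *\<^sub>R u - (x - y)"
      by (simp add: scaleR_add_left nx algebra_simps)
    hence "norm (u + y) \<ge> norm ((1 + norm x) *\<^sub>R u) - norm (x - y)"
      by (metis norm_triangle_ineq2)
    moreover have "norm ((1 + norm x) *\<^sub>R u) = 1 + norm x" using u1 by simp
    ultimately have "norm (u + y) \<ge> 2 - 2 * d" using yd by linarith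
    hence "norm ((u + y) /\<^sub>R 2) \<ge> 1 - d" by simp
    hence "norm (u - y) \<le> e" using H u1 y1 by blast
    thus ?thesis by (simp add: u_def norm_minus_commute)
  qed
  thus "\<exists>d>0. \<forall>x::'a. norm x > 1 \<longrightarrow>
      (\<forall>y\<in>approx_proj unit_sphere x d. norm (y - x /\<^sub>R norm x) \<le> e)"
    using d by (intro exI[of _ "2 * d"]) auto
qed

lemma bounded_P: "bounded (approx_proj unit_sphere x d)"
  by (rule bounded_subset[OF _ approx_sub]) (simp add: unit_sphere_def bounded_subset[OF bounded_cball sphere_cball])

lemma KK_D3:
  assumes "KK TYPE('a::real_normed_vector)"
  shows "D3 TYPE('a)"
  unfolding D3_def
proof (intro allI impI)
  fix e :: real assume "e > 0"
  then obtain d where d: "d > 0" and H: "\<forall>x::'a. norm x > 1 \<longrightarrow>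
      (\<forall>y\<in>approx_proj unit_sphere x d. norm (y - x /\<^sub>R norm x) \<le> e/2)"
    using assms unfolding KK_def by (meson half_gt_zero)
  obtain N where N: "\<forall>n\<ge>N. 0 < 1 / real n \<and> 1 / real n \<le> d" using small_inv[OF d] by blast
  have "diameter (approx_proj unit_sphere x (1 / real n)) \<le> e"
    if n: "n \<ge> N" and x: "x \<in> UNIV - unit_ball" for n and x :: 'a
  proof (rule diameter_le)
    show "approx_proj unit_sphere x (1 / real n) \<noteq> {} \<or> 0 \<le> e" using \<open>e>0\<close> by simp
    fix y y' assume y: "y \<in> approx_proj unit_sphere x (1 / real n)"
      and y': "y' \<in> approx_proj unit_sphere x (1 / real n)"
    have x1: "norm x > 1" using X1_iff x by blast
    have yd: "y \<in> approx_proj unit_sphere x d" "y' \<in> approx_proj unit_sphere x d"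
      using approx_mono[of x, OF _ _ y] approx_mono[of x, OF _ _ y'] N n x1 by auto
    have "norm (y - x /\<^sub>R norm x) \<le> e/2" using H x1 yd(1) by blast
    moreover have "norm (y' - x /\<^sub>R norm x) \<le> e/2" using H x1 yd(2) by blast
    moreover have "norm (y - y') \<le> norm (y - x /\<^sub>R norm x) + norm (y' - x /\<^sub>R norm x)"
      using norm_triangle_ineq4[of "y - x /\<^sub>R norm x" "y' - x /\<^sub>R norm x"] by simp
    ultimately show "norm (y - y') \<le> e" by linarith
  qed
  thus "\<exists>N. \<forall>n\<ge>N. \<forall>x::'a\<in>UNIV - unit_ball. diameter (approx_proj unit_sphere x (1 / real n)) \<le> e"
    by blast
qed



lemma D3_UR:
  assumes "D3 TYPE('a::real_normed_vector)"
  shows "uniformly_rotund TYPE('a)"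
  unfolding uniformly_rotund_def
proof (intro allI impI)
  fix xs ys :: "nat \<Rightarrow> 'a"
  assume S: "\<forall>n. xs n \<in> unit_sphere \<and> ys n \<in> unit_sphere"
    and L: "(\<lambda>n. norm ((xs n + ys n) /\<^sub>R 2)) \<longlonglongrightarrow> 1"
  show "(\<lambda>n. norm (xs n - ys n)) \<longlonglongrightarrow> 0"
  proof (rule LIMSEQ_I)
    fix r :: real assume "r > 0"
    then obtain N where N: "\<forall>n\<ge>N. \<forall>x::'a\<in>UNIV - unit_ball.
      diameter (approx_proj unit_sphere x (1 / real n)) \<le> r/2"
      using assms unfolding D3_def by (meson half_gt_zero)
    define M where "M = max N 2"
    have M2: "real M \<ge> 2" by (simp add: M_def)
    have MN: "M \<ge> N" by (simp add: M_def)
    have pos: "1 / (2 * real M) > 0" using M2 by simp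
    obtain K where K: "\<forall>k\<ge>K. norm (norm ((xs k + ys k) /\<^sub>R 2) - 1) < 1 / (2 * real M)"
      using LIMSEQ_D[OF L pos] by blast
    have "norm (norm (xs k - ys k) - 0) < r" if k: "k \<ge> K" for k
    proof -
      define p where "p = xs k + ys k"
      have x1: "norm (xs k) = 1" and y1: "norm (ys k) = 1" using S by (auto simp: sphere_iff)
      have "norm p / 2 > 1 - 1 / (2 * real M)" using K k by (auto simp: p_def)
      hence pM: "norm p > 2 - 1 / real M" using M2 by (simp add: field_simps)
      have "1 / real M \<le> 1/2" using M2 by (simp add: field_simps)
      hence p1: "norm p > 1" using pM by linarith
      have xin: "xs k \<in> approx_proj unit_sphere p (1 / real M)"
        using p1 pM x1 y1 by (subst approx_proj_iff) (auto simp: p_def)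
      have yin: "ys k \<in> approx_proj unit_sphere p (1 / real M)"
        using p1 pM x1 y1 by (subst approx_proj_iff) (auto simp: p_def)
      have "dist (xs k) (ys k) \<le> diameter (approx_proj unit_sphere p (1 / real M))"
        by (rule diameter_bounded_bound[OF bounded_P xin yin])
      also have "\<dots> \<le> r/2" using N MN p1 X1_iff[of p] by blast
      finally show ?thesis using \<open>r>0\<close> by (simp add: dist_norm)
    qed
    thus "\<exists>no. \<forall>n\<ge>no. norm (norm (xs n - ys n) - 0) < r" by blast
  qed
qed

lemma KK_mp:
  assumes "KK TYPE('a::real_normed_vector)" "norm (x::'a) > 1"
  shows "metric_proj unit_sphere x = {x /\<^sub>R norm x}"
proof -
  have "y = x /\<^sub>R norm x" if y: "y \<in> approx_proj unit_sphere x 0" for y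
  proof -
    have "norm (y - x /\<^sub>R norm x) \<le> e" if "e > 0" for e
    proof -
      obtain d where d: "d > 0" and H: "\<forall>x::'a. norm x > 1 \<longrightarrow>
        (\<forall>y\<in>approx_proj unit_sphere x d. norm (y - x /\<^sub>R norm x) \<le> e)"
        using assms(1) \<open>e>0\<close> unfolding KK_def by blast
      have "y \<in> approx_proj unit_sphere x d" using approx_mono[OF _ _ y] assms(2) d by simp
      thus ?thesis using H assms(2) by blast
    qed
    hence "norm (y - x /\<^sub>R norm x) \<le> 0" by (meson dense_ge)
    thus ?thesis by simp
  qed
  moreover have "x /\<^sub>R norm x \<in> approx_proj unit_sphere x 0" using assms(2) by (intro u_in) auto
  ultimately show ?thesis unfolding metric_proj_def by blast
qed

lemma KK_USC:
  "KK TYPE('a::real_normed_vector) \<longleftrightarrow> uniformly_strongly_chebyshev unit_sphere (UNIV - unit_ball :: 'a set)"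
proof
  assume K: "KK TYPE('a)"
  show "uniformly_strongly_chebyshev unit_sphere (UNIV - unit_ball :: 'a set)"
    unfolding uniformly_strongly_chebyshev_def
  proof (intro conjI allI impI ballI)
    fix x :: 'a assume "x \<in> UNIV - unit_ball"
    hence "norm x > 1" using X1_iff by blast
    thus "\<exists>p. metric_proj unit_sphere x = {p}" using KK_mp[OF K] by blast
  next
    fix e :: real assume "e > 0"
    then obtain d where d: "d > 0" and H: "\<forall>x::'a. norm x > 1 \<longrightarrow>
        (\<forall>y\<in>approx_proj unit_sphere x d. norm (y - x /\<^sub>R norm x) \<le> e)"
      using K unfolding KK_def by blast
    have Sub: "approx_proj unit_sphere x d \<subseteq> {p + e *\<^sub>R u |p u. p \<in> metric_proj unit_sphere x \<and> u \<in> unit_ball}"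
      if x: "x \<in> UNIV - unit_ball" for x :: 'a
    proof
      fix y assume y: "y \<in> approx_proj unit_sphere x d"
      have x1: "norm x > 1" using X1_iff x by blast
      have le: "norm (y - x /\<^sub>R norm x) \<le> e" using H x1 y by blast
      have eq: "norm ((y - x /\<^sub>R norm x) /\<^sub>R e) = inverse e * norm (y - x /\<^sub>R norm x)"
        by (simp only: norm_scaleR abs_inverse abs_of_pos[OF \<open>e>0\<close>])
      have ie: "inverse e * e = 1" using \<open>e>0\<close> by simp
      have "inverse e * norm (y - x /\<^sub>R norm x) \<le> inverse e * e"
        by (rule mult_left_mono[OF le]) (use \<open>e>0\<close> in simp)
      hence "norm ((y - x /\<^sub>R norm x) /\<^sub>R e) \<le> 1" unfolding eq ie .
      hence "(y - x /\<^sub>R norm x) /\<^sub>R e \<in> unit_ball" by (simp only: ball_iff)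
      moreover have "y = x /\<^sub>R norm x + e *\<^sub>R ((y - x /\<^sub>R norm x) /\<^sub>R e)" using \<open>e>0\<close> by simp
      ultimately show "y \<in> {p + e *\<^sub>R u |p u. p \<in> metric_proj unit_sphere x \<and> u \<in> unit_ball}"
        using KK_mp[OF K x1] by blast
    qed
    thus "\<exists>d>0. \<forall>x\<in>UNIV - (unit_ball::'a set). approx_proj unit_sphere x d
            \<subseteq> {p + e *\<^sub>R u |p u. p \<in> metric_proj unit_sphere x \<and> u \<in> unit_ball}"
      by (intro exI[of _ d] conjI d ballI) (rule Sub)
  qed
next
  assume U: "uniformly_strongly_chebyshev unit_sphere (UNIV - unit_ball :: 'a set)"
  show "KK TYPE('a)" unfolding KK_def
  proof (intro allI impI)
    fix e :: real assume "e > 0"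
    then obtain d where d: "d > 0" and H: "\<forall>x\<in>UNIV - (unit_ball::'a set). approx_proj unit_sphere x d
            \<subseteq> {p + e *\<^sub>R u |p u. p \<in> metric_proj unit_sphere x \<and> u \<in> unit_ball}"
      using U unfolding uniformly_strongly_chebyshev_def by blast
    have "norm (y - x /\<^sub>R norm x) \<le> e"
      if x1: "norm x > 1" and y: "y \<in> approx_proj unit_sphere x d" for x y :: 'a
    proof -
      have x: "x \<in> UNIV - unit_ball" using X1_iff x1 by blast
      obtain p where p: "metric_proj unit_sphere x = {p}"
        using U x unfolding uniformly_strongly_chebyshev_def by blast
      have "x /\<^sub>R norm x \<in> metric_proj unit_sphere x" unfolding metric_proj_def
        using x1 by (intro u_in) auto
      hence pu: "p = x /\<^sub>R norm x" using p by simp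
      have "y \<in> {p + e *\<^sub>R u |p u. p \<in> metric_proj unit_sphere x \<and> u \<in> unit_ball}" using H x y by blast
      then obtain v :: 'a where v: "v \<in> unit_ball" "y = p + e *\<^sub>R v" using p by force
      have "norm (y - x /\<^sub>R norm x) = e * norm v" using v pu \<open>e>0\<close> by simp
      also have "\<dots> \<le> e" using v(1) \<open>e>0\<close> by (simp add: ball_iff)
      finally show ?thesis .
    qed
    thus "\<exists>d>0. \<forall>x::'a. norm x > 1 \<longrightarrow>
      (\<forall>y\<in>approx_proj unit_sphere x d. norm (y - x /\<^sub>R norm x) \<le> e)" using d by blast
  qed
qed



lemma scale_ball:
  fixes w :: "'a::real_normed_vector"
  assumes "r > 0" "norm w \<le> r"
  shows "w /\<^sub>R r \<in> unit_ball"
proof -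
  have eq: "norm (w /\<^sub>R r) = inverse r * norm w"
    by (simp only: norm_scaleR abs_inverse abs_of_pos[OF assms(1)])
  have ie: "inverse r * r = 1" using assms(1) by simp
  have "inverse r * norm w \<le> inverse r * r"
    by (rule mult_left_mono[OF assms(2)]) (use assms(1) in simp)
  hence "norm (w /\<^sub>R r) \<le> 1" unfolding eq ie .
  thus ?thesis by (simp only: ball_iff)
qed

definition HS :: "'a::real_normed_vector set \<Rightarrow> 'a set \<Rightarrow> real set" where
  "HS A B = {r. r > 0 \<and>
      A \<subseteq> {b + r *\<^sub>R u | b u. b \<in> B \<and> u \<in> unit_ball} \<and>
      B \<subseteq> {a + r *\<^sub>R u | a u. a \<in> A \<and> u \<in> unit_ball}}"

lemma hausdorff_HS: "hausdorff A B = Inf (HS A B)"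
  by (simp add: hausdorff_def HS_def)

lemma HS_mem:
  fixes u :: "'a::real_normed_vector"
  assumes "r > 0" "\<forall>a\<in>A. norm (a - u) \<le> r" "u \<in> A"
  shows "r \<in> HS A {u}"
proof -
  have "A \<subseteq> {b + r *\<^sub>R v | b v. b \<in> {u} \<and> v \<in> unit_ball}"
  proof
    fix a assume a: "a \<in> A"
    have "(a - u) /\<^sub>R r \<in> unit_ball" using scale_ball[OF assms(1)] assms(2) a by blast
    moreover have "a = u + r *\<^sub>R ((a - u) /\<^sub>R r)" using assms(1) by simp
    ultimately show "a \<in> {b + r *\<^sub>R v | b v. b \<in> {u} \<and> v \<in> unit_ball}" by blast
  qed
  moreover have "{u} \<subseteq> {a + r *\<^sub>R v | a v. a \<in> A \<and> v \<in> unit_ball}"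
  proof -
    have "(0::'a) \<in> unit_ball" by (simp add: ball_iff)
    moreover have "u = u + r *\<^sub>R 0" by simp
    ultimately show ?thesis using assms(3) by blast
  qed
  ultimately show ?thesis using assms(1) unfolding HS_def by blast
qed

lemma HS_pos: "r \<in> HS A B \<Longrightarrow> r > 0"
  by (simp add: HS_def)

lemma haus_le:
  fixes u :: "'a::real_normed_vector"
  assumes "r > 0" "\<forall>a\<in>A. norm (a - u) \<le> r" "u \<in> A"
  shows "hausdorff A {u} \<le> r"
  unfolding hausdorff_HS
  by (rule cInf_lower[OF HS_mem[OF assms]]) (rule bdd_belowI[of _ 0], auto dest: HS_pos)

lemma haus_ge0:
  fixes u :: "'a::real_normed_vector"
  assumes "r > 0" "\<forall>a\<in>A. norm (a - u) \<le> r" "u \<in> A"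
  shows "hausdorff A {u} \<ge> 0"
  unfolding hausdorff_HS
  by (rule cInf_greatest) (use HS_mem[OF assms] in \<open>auto dest: HS_pos intro: less_imp_le\<close>)

lemma haus_lt:
  fixes u :: "'a::real_normed_vector"
  assumes "r > 0" "\<forall>a\<in>A. norm (a - u) \<le> r" "u \<in> A"
    and lt: "hausdorff A {u} < e" and y: "y \<in> A"
  shows "norm (y - u) < e"
proof -
  obtain s where s: "s \<in> HS A {u}" "s < e"
    using cInf_lessD[of "HS A {u}" e] HS_mem[OF assms(1-3)] lt unfolding hausdorff_HS by blast
  have "y \<in> {b + s *\<^sub>R v | b v. b \<in> {u} \<and> v \<in> unit_ball}" using s(1) y unfolding HS_def by blast
  then obtain v :: 'a where v: "v \<in> unit_ball" "y = u + s *\<^sub>R v" by blast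
  have sp: "s > 0" using HS_pos[OF s(1)] .
  have "norm (y - u) = s * norm v" using v sp by simp
  also have "\<dots> \<le> s" using v(1) sp by (simp add: ball_iff)
  finally show ?thesis using s(2) by simp
qed

lemma sphere_dist2:
  fixes a b :: "'a::real_normed_vector"
  assumes "a \<in> unit_sphere" "b \<in> unit_sphere"
  shows "norm (a - b) \<le> 2"
  using norm_triangle_ineq4[of a b] assms by (simp add: sphere_iff)

lemma P_u_bound:
  fixes x :: "'a::real_normed_vector"
  assumes "norm x > 1"
  shows "\<forall>a\<in>approx_proj unit_sphere x d. norm (a - x /\<^sub>R norm x) \<le> 2"
proof
  fix a assume "a \<in> approx_proj unit_sphere x d"
  hence "a \<in> unit_sphere" using approx_sub by blast
  moreover have "x /\<^sub>R norm x \<in> unit_sphere" proof -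
    have "norm x \<noteq> 0" using assms by linarith
    thus ?thesis by (simp add: sphere_iff)
  qed
  ultimately show "norm (a - x /\<^sub>R norm x) \<le> 2" by (rule sphere_dist2)
qed

lemma haus_bound:
  fixes x :: "'a::real_normed_vector"
  assumes "norm x > 1" "d \<ge> 0"
  shows "0 \<le> hausdorff (approx_proj unit_sphere x d) {x /\<^sub>R norm x} \<and>
         hausdorff (approx_proj unit_sphere x d) {x /\<^sub>R norm x} \<le> 3"
proof -
  have u: "x /\<^sub>R norm x \<in> approx_proj unit_sphere x d" using assms by (intro u_in) auto
  have b: "\<forall>a\<in>approx_proj unit_sphere x d. norm (a - x /\<^sub>R norm x) \<le> 3"
    using P_u_bound[OF assms(1), of d] by fastforce
  show ?thesis using haus_le[OF _ b u] haus_ge0[OF _ b u] by simp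
qed

lemma rad_props:
  fixes A B :: "'a::real_normed_vector set"
  assumes "A \<subseteq> unit_sphere" "B \<subseteq> unit_sphere" "A \<noteq> {}" "B \<noteq> {}"
  shows "\<And>a b. a \<in> A \<Longrightarrow> b \<in> B \<Longrightarrow> norm (a - b) \<le> rad A B"
    and "\<And>c. (\<And>a b. a \<in> A \<Longrightarrow> b \<in> B \<Longrightarrow> norm (a - b) \<le> c) \<Longrightarrow> rad A B \<le> c"
    and "0 \<le> rad A B" "rad A B \<le> 2"
proof -
  have bdd: "bdd_above ((\<lambda>(a, b). norm (a - b)) ` (A \<times> B))"
    by (rule bdd_aboveI[of _ 2]) (use assms sphere_dist2 in auto)
  show le: "norm (a - b) \<le> rad A B" if "a \<in> A" "b \<in> B" for a b
  proof -
    have "norm (a - b) = (\<lambda>(a, b). norm (a - b)) (a, b)" by simp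
    also have "\<dots> \<le> rad A B" unfolding rad_def
      by (rule cSUP_upper[OF _ bdd]) (use that in auto)
    finally show ?thesis .
  qed
  show ub: "rad A B \<le> c" if "\<And>a b. a \<in> A \<Longrightarrow> b \<in> B \<Longrightarrow> norm (a - b) \<le> c" for c
    unfolding rad_def by (rule cSUP_least) (use assms(3,4) that in auto)
  obtain a b where ab: "a \<in> A" "b \<in> B" using assms by blast
  show "0 \<le> rad A B" using le[OF ab] norm_ge_zero[of "a - b"] by linarith
  show "rad A B \<le> 2" by (rule ub) (use assms sphere_dist2 in blast)
qed



lemma unit_in:
  fixes x :: "'a::real_normed_vector"
  assumes "norm x > 1" shows "x /\<^sub>R norm x \<in> unit_sphere"
proof -
  have "norm x \<noteq> 0" using assms by linarith
  thus ?thesis by (simp add: sphere_iff)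
qed

lemma diam_bound:
  fixes x :: "'a::real_normed_vector"
  shows "0 \<le> diameter (approx_proj unit_sphere x d) \<and> diameter (approx_proj unit_sphere x d) \<le> 2"
proof
  show "0 \<le> diameter (approx_proj unit_sphere x d)" by (rule diameter_ge_0[OF bounded_P])
  show "diameter (approx_proj unit_sphere x d) \<le> 2"
    by (rule diameter_le) (simp, meson approx_sub sphere_dist2 subsetD)
qed

lemma D3_iff:
  fixes X1 :: "'a::real_normed_vector set"
  assumes ne: "X1 \<noteq> {}" and X1: "X1 = UNIV - unit_ball"
  shows "(\<lambda>n. SUP x\<in>X1. diameter (approx_proj unit_sphere x (1 / real n))) \<longlonglongrightarrow> 0 \<longleftrightarrow> D3 TYPE('a)"
  unfolding D3_def
  by (subst sup_tendsto_0_iff[OF ne, of _ 2]) (use diam_bound X1 in auto)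

definition C2 :: "'a::real_normed_vector itself \<Rightarrow> bool" where
  "C2 _ \<longleftrightarrow> (\<forall>e>0. \<exists>N. \<forall>n\<ge>N. \<forall>p \<in> (UNIV - unit_ball) \<times> (UNIV - unit_ball :: 'a set).
     (\<lambda>(x, x'). \<bar>rad (approx_proj unit_sphere x (1 / real n)) (approx_proj unit_sphere x' (1 / real n))
                - norm (x /\<^sub>R norm x - x' /\<^sub>R norm x')\<bar>) p \<le> e)"

lemma P_ne: "norm x > 1 \<Longrightarrow> d \<ge> 0 \<Longrightarrow> approx_proj unit_sphere x d \<noteq> {}"
  using u_in[of x d] by auto

lemma C2_iff:
  fixes X1 :: "'a::real_normed_vector set"
  assumes ne: "X1 \<noteq> {}" and X1: "X1 = UNIV - unit_ball"
  shows "(\<lambda>n. SUP (x, x')\<in>X1 \<times> X1.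
              \<bar>rad (approx_proj unit_sphere x (1 / real n)) (approx_proj unit_sphere x' (1 / real n))
                - norm (x /\<^sub>R norm x - x' /\<^sub>R norm x')\<bar>) \<longlonglongrightarrow> 0 \<longleftrightarrow> C2 TYPE('a)"
proof -
  have ne2: "X1 \<times> X1 \<noteq> {}" using ne by simp
  have b: "0 \<le> (\<lambda>(x, x'). \<bar>rad (approx_proj unit_sphere x (1 / real n)) (approx_proj unit_sphere x' (1 / real n))
                - norm (x /\<^sub>R norm x - x' /\<^sub>R norm x')\<bar>) p \<and>
           (\<lambda>(x, x'). \<bar>rad (approx_proj unit_sphere x (1 / real n)) (approx_proj unit_sphere x' (1 / real n))
                - norm (x /\<^sub>R norm x - x' /\<^sub>R norm x')\<bar>) p \<le> 4" if p: "p \<in> X1 \<times> X1" for n p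
  proof -
    obtain x x' where xx: "p = (x, x')" "norm x > 1" "norm x' > 1" using p X1 X1_iff by (cases p) blast
    have d0: "0 \<le> 1 / real n" by simp
    have r: "0 \<le> rad (approx_proj unit_sphere x (1 / real n)) (approx_proj unit_sphere x' (1 / real n))"
            "rad (approx_proj unit_sphere x (1 / real n)) (approx_proj unit_sphere x' (1 / real n)) \<le> 2"
      using rad_props(3,4)[OF approx_sub approx_sub P_ne[OF xx(2) d0] P_ne[OF xx(3) d0]] by auto
    have "norm (x /\<^sub>R norm x - x' /\<^sub>R norm x') \<le> 2"
      by (rule sphere_dist2) (use xx(2,3) unit_in in auto)
    thus ?thesis using r xx(1) by (simp add: abs_le_iff, smt (verit) norm_ge_zero)
  qed
  show ?thesis
    unfolding C2_def
    by (subst sup_tendsto_0_iff[OF ne2, of _ 4]) (use b X1 in auto)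
qed

lemma tri3:
  fixes a b u v :: "'a::real_normed_vector"
  shows "norm (a - b) \<le> norm (a - u) + norm (u - v) + norm (b - v)"
proof -
  have "a - b = ((a - u) + (u - v)) - (b - v)" by (simp add: algebra_simps)
  hence "norm (a - b) \<le> norm ((a - u) + (u - v)) + norm (b - v)"
    by (metis norm_triangle_ineq4)
  also have "\<dots> \<le> norm (a - u) + norm (u - v) + norm (b - v)"
    using norm_triangle_ineq[of "a - u" "u - v"] by simp
  finally show ?thesis .
qed

lemma KK_C2:
  assumes K: "KK TYPE('a::real_normed_vector)"
  shows "C2 TYPE('a)"
  unfolding C2_def
proof (intro allI impI)
  fix e :: real assume "e > 0"
  then obtain d where d: "d > 0" and H: "\<forall>x::'a. norm x > 1 \<longrightarrow>
      (\<forall>y\<in>approx_proj unit_sphere x d. norm (y - x /\<^sub>R norm x) \<le> e/2)"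
    using K unfolding KK_def by (meson half_gt_zero)
  obtain N where N: "\<forall>n\<ge>N. 0 < 1 / real n \<and> 1 / real n \<le> d" using small_inv[OF d] by blast
  have "(\<lambda>(x, x'). \<bar>rad (approx_proj unit_sphere x (1 / real n)) (approx_proj unit_sphere x' (1 / real n))
                - norm (x /\<^sub>R norm x - x' /\<^sub>R norm x')\<bar>) p \<le> e"
    if n: "n \<ge> N" and p: "p \<in> (UNIV - unit_ball) \<times> (UNIV - unit_ball :: 'a set)" for n p
  proof -
    obtain x x' :: 'a where xx: "p = (x, x')" "norm x > 1" "norm x' > 1" using p X1_iff by (cases p) blast
    define A where "A = approx_proj unit_sphere x (1 / real n)"
    define B where "B = approx_proj unit_sphere x' (1 / real n)"
    define u where "u = x /\<^sub>R norm x"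
    define u' where "u' = x' /\<^sub>R norm x'"
    have d0: "0 \<le> 1 / real n" by simp
    note R = rad_props[OF approx_sub approx_sub P_ne[OF xx(2) d0] P_ne[OF xx(3) d0], folded A_def B_def]
    have uA: "u \<in> A" unfolding A_def u_def using xx(2) by (intro u_in) auto
    have uB: "u' \<in> B" unfolding B_def u'_def using xx(3) by (intro u_in) auto
    have Aa: "norm (a - u) \<le> e/2" if "a \<in> A" for a
    proof -
      have "a \<in> approx_proj unit_sphere x d" using approx_mono[of x, OF _ _ that[unfolded A_def]] N n xx(2) by auto
      thus ?thesis using H xx(2) unfolding u_def by blast
    qed
    have Bb: "norm (b - u') \<le> e/2" if "b \<in> B" for b
    proof -
      have "b \<in> approx_proj unit_sphere x' d" using approx_mono[of x', OF _ _ that[unfolded B_def]] N n xx(3) by auto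
      thus ?thesis using H xx(3) unfolding u'_def by blast
    qed
    have up: "rad A B \<le> norm (u - u') + e"
    proof (rule R(2))
      fix a b assume "a \<in> A" "b \<in> B"
      thus "norm (a - b) \<le> norm (u - u') + e" using Aa Bb tri3[of a b u u'] by fastforce
    qed
    have lo: "norm (u - u') \<le> rad A B" by (rule R(1)[OF uA uB])
    show ?thesis using up lo xx(1) by (simp add: A_def B_def u_def u'_def)
  qed
  thus "\<exists>N. \<forall>n\<ge>N. \<forall>p \<in> (UNIV - unit_ball) \<times> (UNIV - unit_ball :: 'a set).
     (\<lambda>(x, x'). \<bar>rad (approx_proj unit_sphere x (1 / real n)) (approx_proj unit_sphere x' (1 / real n))
                - norm (x /\<^sub>R norm x - x' /\<^sub>R norm x')\<bar>) p \<le> e" by blast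
qed

lemma C2_D3:
  assumes C: "C2 TYPE('a::real_normed_vector)"
  shows "D3 TYPE('a)"
  unfolding D3_def
proof (intro allI impI)
  fix e :: real assume "e > 0"
  then obtain N where N: "\<forall>n\<ge>N. \<forall>p \<in> (UNIV - unit_ball) \<times> (UNIV - unit_ball :: 'a set).
     (\<lambda>(x, x'). \<bar>rad (approx_proj unit_sphere x (1 / real n)) (approx_proj unit_sphere x' (1 / real n))
                - norm (x /\<^sub>R norm x - x' /\<^sub>R norm x')\<bar>) p \<le> e"
    using C unfolding C2_def by blast
  have "diameter (approx_proj unit_sphere x (1 / real n)) \<le> e"
    if n: "n \<ge> N" and x: "x \<in> UNIV - (unit_ball :: 'a set)" for n x
  proof -
    have x1: "norm x > 1" using x X1_iff by blast
    define A where "A = approx_proj unit_sphere x (1 / real n)"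
    have d0: "0 \<le> 1 / real n" by simp
    note R = rad_props[OF approx_sub approx_sub P_ne[OF x1 d0] P_ne[OF x1 d0], folded A_def]
    have "\<bar>rad A A - norm (x /\<^sub>R norm x - x /\<^sub>R norm x)\<bar> \<le> e"
      using N[rule_format, OF n, of "(x, x)"] x unfolding A_def by simp
    hence re: "rad A A \<le> e" by simp
    have "diameter A \<le> rad A A"
      by (rule diameter_le) (use P_ne[OF x1 d0] R(1) in \<open>auto simp: A_def\<close>)
    thus ?thesis using re by (simp add: A_def)
  qed
  thus "\<exists>N. \<forall>n\<ge>N. \<forall>x::'a\<in>UNIV - unit_ball.
      diameter (approx_proj unit_sphere x (1 / real n)) \<le> e" by blast
qed



definition H4 :: "'a::real_normed_vector itself \<Rightarrow> bool" where
  "H4 _ \<longleftrightarrow> (\<forall>e>0. \<exists>N. \<forall>n\<ge>N. \<forall>x::'a\<in>UNIV - unit_ball.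
      hausdorff (approx_proj unit_sphere x (1 / real n)) {x /\<^sub>R norm x} \<le> e)"

lemma H4_iff:
  fixes X1 :: "'a::real_normed_vector set"
  assumes ne: "X1 \<noteq> {}" and X1: "X1 = UNIV - unit_ball"
    and mp: "\<forall>x\<in>X1. metric_proj unit_sphere x = {x /\<^sub>R norm x}"
  shows "(\<lambda>n. SUP x\<in>X1. hausdorff (approx_proj unit_sphere x (1 / real n)) (metric_proj unit_sphere x))
              \<longlonglongrightarrow> 0 \<longleftrightarrow> H4 TYPE('a)"
proof -
  have eq: "(\<lambda>n. SUP x\<in>X1. hausdorff (approx_proj unit_sphere x (1 / real n)) (metric_proj unit_sphere x))
      = (\<lambda>n. SUP x\<in>X1. hausdorff (approx_proj unit_sphere x (1 / real n)) {x /\<^sub>R norm x})"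
    using mp by (intro ext SUP_cong) auto
  have b: "0 \<le> hausdorff (approx_proj unit_sphere x (1 / real n)) {x /\<^sub>R norm x} \<and>
           hausdorff (approx_proj unit_sphere x (1 / real n)) {x /\<^sub>R norm x} \<le> 3"
    if "x \<in> X1" for n x
    by (rule haus_bound) (use that X1 X1_iff in auto)
  show ?thesis unfolding eq H4_def
    by (subst sup_tendsto_0_iff[OF ne, of _ 3]) (use b X1 in auto)
qed

lemma KK_H4:
  assumes K: "KK TYPE('a::real_normed_vector)"
  shows "H4 TYPE('a)"
  unfolding H4_def
proof (intro allI impI)
  fix e :: real assume "e > 0"
  then obtain d where d: "d > 0" and H: "\<forall>x::'a. norm x > 1 \<longrightarrow>
      (\<forall>y\<in>approx_proj unit_sphere x d. norm (y - x /\<^sub>R norm x) \<le> e)"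
    using K unfolding KK_def by blast
  obtain N where N: "\<forall>n\<ge>N. 0 < 1 / real n \<and> 1 / real n \<le> d" using small_inv[OF d] by blast
  have "hausdorff (approx_proj unit_sphere x (1 / real n)) {x /\<^sub>R norm x} \<le> e"
    if n: "n \<ge> N" and x: "x \<in> UNIV - (unit_ball :: 'a set)" for n x
  proof (rule haus_le[OF \<open>e>0\<close>])
    have x1: "norm x > 1" using x X1_iff by blast
    show "x /\<^sub>R norm x \<in> approx_proj unit_sphere x (1 / real n)" using x1 by (intro u_in) auto
    show "\<forall>a\<in>approx_proj unit_sphere x (1 / real n). norm (a - x /\<^sub>R norm x) \<le> e"
    proof
      fix a assume a: "a \<in> approx_proj unit_sphere x (1 / real n)"
      have "a \<in> approx_proj unit_sphere x d" using approx_mono[of x, OF _ _ a] N n x1 by auto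
      thus "norm (a - x /\<^sub>R norm x) \<le> e" using H x1 by blast
    qed
  qed
  thus "\<exists>N. \<forall>n\<ge>N. \<forall>x::'a\<in>UNIV - unit_ball.
      hausdorff (approx_proj unit_sphere x (1 / real n)) {x /\<^sub>R norm x} \<le> e" by blast
qed

lemma H4_KK:
  assumes H: "H4 TYPE('a::real_normed_vector)"
  shows "KK TYPE('a)"
  unfolding KK_def
proof (intro allI impI)
  fix e :: real assume "e > 0"
  then obtain N where N: "\<forall>n\<ge>N. \<forall>x::'a\<in>UNIV - unit_ball.
      hausdorff (approx_proj unit_sphere x (1 / real n)) {x /\<^sub>R norm x} \<le> e/2"
    using H unfolding H4_def by (meson half_gt_zero)
  define d where "d = 1 / real (Suc N)"
  have d: "d > 0" by (simp add: d_def)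
  have "norm (y - x /\<^sub>R norm x) \<le> e"
    if x1: "norm x > 1" and y: "y \<in> approx_proj unit_sphere x d" for x y :: 'a
  proof -
    have x: "x \<in> UNIV - (unit_ball :: 'a set)" using x1 X1_iff by blast
    have "hausdorff (approx_proj unit_sphere x d) {x /\<^sub>R norm x} \<le> e/2"
      using N[rule_format, of "Suc N" x] x unfolding d_def by simp
    hence lt: "hausdorff (approx_proj unit_sphere x d) {x /\<^sub>R norm x} < e" using \<open>e>0\<close> by simp
    have u: "x /\<^sub>R norm x \<in> approx_proj unit_sphere x d" using x1 d by (intro u_in) auto
    have "norm (y - x /\<^sub>R norm x) < e"
      by (rule haus_lt[of 2, OF _ P_u_bound[OF x1] u lt y]) simp
    thus ?thesis by simp
  qed
  thus "\<exists>d>0. \<forall>x::'a. norm x > 1 \<longrightarrow>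
      (\<forall>y\<in>approx_proj unit_sphere x d. norm (y - x /\<^sub>R norm x) \<le> e)" using d by blast
qed

theorem corollary3p10:
  fixes X1 :: "'a::banach set"
  assumes nontrivial: "\<exists>x::'a. x \<noteq> 0"
    and X1_def: "X1 = UNIV - unit_ball"
  shows "(uniformly_rotund TYPE('a) \<longleftrightarrow>
           (\<lambda>n. SUP (x, x')\<in>X1 \<times> X1.
              \<bar>rad (approx_proj unit_sphere x (1 / real n)) (approx_proj unit_sphere x' (1 / real n))
                - norm (x /\<^sub>R norm x - x' /\<^sub>R norm x')\<bar>) \<longlonglongrightarrow> 0)
       \<and> (uniformly_rotund TYPE('a) \<longleftrightarrow>
           (\<lambda>n. SUP x\<in>X1. diameter (approx_proj unit_sphere x (1 / real n))) \<longlonglongrightarrow> 0)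
       \<and> (uniformly_rotund TYPE('a) \<longleftrightarrow>
           (\<forall>x\<in>X1. metric_proj unit_sphere x = {x /\<^sub>R norm x}) \<and>
           (\<lambda>n. SUP x\<in>X1. hausdorff (approx_proj unit_sphere x (1 / real n)) (metric_proj unit_sphere x))
              \<longlonglongrightarrow> 0)
       \<and> (uniformly_rotund TYPE('a) \<longleftrightarrow> uniformly_strongly_chebyshev unit_sphere X1)"
proof -
  obtain v :: 'a where v: "v \<noteq> 0" using nontrivial by blast
  have "norm ((2 / norm v) *\<^sub>R v) = 2" using v by simp
  hence "(2 / norm v) *\<^sub>R v \<in> X1" using X1_def X1_iff by fastforce
  hence ne: "X1 \<noteq> {}" by blast
  have UK: "uniformly_rotund TYPE('a) \<longleftrightarrow> KK TYPE('a)"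
    using UR_KK KK_D3 D3_UR by blast
  have UD: "uniformly_rotund TYPE('a) \<longleftrightarrow> D3 TYPE('a)"
    using UR_KK KK_D3 D3_UR by blast
  have P2: "uniformly_rotund TYPE('a) \<longleftrightarrow> C2 TYPE('a)"
    using UK KK_C2 C2_D3 D3_UR by blast
  have P4: "uniformly_rotund TYPE('a) \<longleftrightarrow>
           (\<forall>x\<in>X1. metric_proj unit_sphere x = {x /\<^sub>R norm x}) \<and>
           (\<lambda>n. SUP x\<in>X1. hausdorff (approx_proj unit_sphere x (1 / real n)) (metric_proj unit_sphere x))
              \<longlonglongrightarrow> 0"
  proof
    assume U: "uniformly_rotund TYPE('a)"
    hence K: "KK TYPE('a)" using UK by blast
    have mp: "\<forall>x\<in>X1. metric_proj unit_sphere x = {x /\<^sub>R norm x}"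
      using KK_mp[OF K] X1_def X1_iff by blast
    show "(\<forall>x\<in>X1. metric_proj unit_sphere x = {x /\<^sub>R norm x}) \<and>
           (\<lambda>n. SUP x\<in>X1. hausdorff (approx_proj unit_sphere x (1 / real n)) (metric_proj unit_sphere x))
              \<longlonglongrightarrow> 0"
      using mp H4_iff[OF ne X1_def mp] KK_H4[OF K] by blast
  next
    assume A: "(\<forall>x\<in>X1. metric_proj unit_sphere x = {x /\<^sub>R norm x}) \<and>
           (\<lambda>n. SUP x\<in>X1. hausdorff (approx_proj unit_sphere x (1 / real n)) (metric_proj unit_sphere x))
              \<longlonglongrightarrow> 0"
    hence "H4 TYPE('a)" using H4_iff[OF ne X1_def] by blast
    thus "uniformly_rotund TYPE('a)" using H4_KK UK by blast
  qed
  show ?thesis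
    using P2 C2_iff[OF ne X1_def] UD D3_iff[OF ne X1_def] P4 UK KK_USC X1_def by blast
qed


end
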